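(* Let $\alpha_1,\alpha_2\ge0$ with $\alpha_1+\alpha_2=1$ and $\alpha_2\ge\alpha_1$. Consider problem (P3): maximize $r$ over $(r,r_1,r_2,x,p_1,p_2)$ with $x\in\mathbb{R}$, subject to $r_k\ge\alpha_kr$ for $k=1,2$, $(r_1,r_2)\in\mathcal{C}_{\rm MAC}(x,p_1,p_2)$, $p_1+p_2\le\bar P$, $p_1,p_2\ge0$. Then there always exists an optimal UAV hovering location $x^*$ for (P3) with $0\le x^*\le D/2$.
   Context: Fix $D>0$, $H>0$, $\beta_0>0$, $\bar P>0$. Ground users GU 1, GU 2 are at horizontal positions $x_1=-D/2$, $x_2=D/2$; for a fixed UAV horizontal position $x$ (altitude $H$), $h_k(x)=\beta_0/((x-x_k)^2+H^2)$. For $p_1,p_2\ge0$, $\mathcal{C}_{\rm MAC}(x,p_1,p_2)$ is the set of $(r_1,r_2)$ with $r_1,r_2\ge0$, $r_1\le\log_2(1+p_1h_1(x))$, $r_2\le\log_2(1+p_2h_2(x))$, $r_1+r_2\le\log_2(1+p_1h_1(x)+p_2h_2(x))$. *)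

theory Defs
  imports Complex_Main
begin

text \<open>Channel gain from a UAV at horizontal position x (altitude H) to a ground user
  at horizontal position xk.\<close>
definition chan_gain :: "real \<Rightarrow> real \<Rightarrow> real \<Rightarrow> real \<Rightarrow> real" where
  "chan_gain beta0 H xk x = beta0 / ((x - xk)^2 + H^2)"

definition h1 :: "real \<Rightarrow> real \<Rightarrow> real \<Rightarrow> real \<Rightarrow> real" where
  "h1 D H beta0 x = chan_gain beta0 H (- D / 2) x"

definition h2 :: "real \<Rightarrow> real \<Rightarrow> real \<Rightarrow> real \<Rightarrow> real" where
  "h2 D H beta0 x = chan_gain beta0 H (D / 2) x"

definition C_MAC :: "real \<Rightarrow> real \<Rightarrow> real \<Rightarrow> real \<Rightarrow> real \<Rightarrow> real \<Rightarrow> (real \<times> real) set" where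
  "C_MAC D H beta0 x p1 p2 = {(r1, r2). r1 \<ge> 0 \<and> r2 \<ge> 0 \<and>
     r1 \<le> log 2 (1 + p1 * h1 D H beta0 x) \<and>
     r2 \<le> log 2 (1 + p2 * h2 D H beta0 x) \<and>
     r1 + r2 \<le> log 2 (1 + p1 * h1 D H beta0 x + p2 * h2 D H beta0 x)}"

definition P3_feasible :: "real \<Rightarrow> real \<Rightarrow> real \<Rightarrow> real \<Rightarrow> real \<Rightarrow> real \<Rightarrow>
    real \<Rightarrow> real \<Rightarrow> real \<Rightarrow> real \<Rightarrow> real \<Rightarrow> real \<Rightarrow> bool" where
  "P3_feasible D H beta0 Pbar a1 a2 r r1 r2 x p1 p2 \<longleftrightarrow>
     r1 \<ge> a1 * r \<and> r2 \<ge> a2 * r \<and>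
     (r1, r2) \<in> C_MAC D H beta0 x p1 p2 \<and>
     p1 + p2 \<le> Pbar \<and> p1 \<ge> 0 \<and> p2 \<ge> 0"

end

theory Submission
  imports Defs "HOL-Analysis.Analysis"
begin

definition GG :: "real \<Rightarrow> real \<Rightarrow> real \<Rightarrow> real \<Rightarrow> real \<Rightarrow> real \<Rightarrow> real \<Rightarrow> real \<Rightarrow> real \<Rightarrow> real \<Rightarrow> bool" where
  "GG D H b P a1 a2 x p1 p2 r \<longleftrightarrow> 0 \<le> p1 \<and> 0 \<le> p2 \<and> p1 + p2 \<le> P \<and>
     2 powr (a1 * r) \<le> 1 + p1 * h1 D H b x \<and> 2 powr (a2 * r) \<le> 1 + p2 * h2 D H b x \<and>
     2 powr r \<le> 1 + p1 * h1 D H b x + p2 * h2 D H b x"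

lemma h_eq: "h1 D H b x = b / ((x + D/2)^2 + H^2)" "h2 D H b x = b / ((x - D/2)^2 + H^2)"
  by (simp_all add: h1_def h2_def chan_gain_def)

lemma h_pos: "H > 0 \<Longrightarrow> b > 0 \<Longrightarrow> h1 D H b x > 0 \<and> h2 D H b x > 0"
  unfolding h_eq by (auto intro!: divide_pos_pos add_nonneg_pos)

lemma h_sym: "h1 D H b (-x) = h2 D H b x" "h2 D H b (-x) = h1 D H b x"
  unfolding h_eq by (simp_all add: power2_eq_square algebra_simps)

lemma h_bound: "H > 0 \<Longrightarrow> b > 0 \<Longrightarrow> h1 D H b x \<le> b / H^2 \<and> h2 D H b x \<le> b / H^2"
  unfolding h_eq by (auto intro!: divide_left_mono mult_pos_pos add_nonneg_pos)

lemma h_order: assumes "x \<le> 0" "D > 0" "H > 0" "b > 0"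
  shows "h2 D H b x \<le> h1 D H b x"
proof -
  have "D * x \<le> 0" using assms by (simp add: mult_nonneg_nonpos)
  then have "(x + D/2)^2 \<le> (x - D/2)^2" by (simp add: power2_eq_square algebra_simps)
  then show ?thesis unfolding h_eq using assms
    by (intro divide_left_mono) (auto intro!: mult_pos_pos add_nonneg_pos)
qed

lemma h_right: assumes "x \<ge> D/2" "D > 0" "H > 0" "b > 0"
  shows "h1 D H b x \<le> h1 D H b (D/2) \<and> h2 D H b x \<le> h2 D H b (D/2)"
proof -
  have "(D/2 + D/2)^2 \<le> (x + D/2)^2" using assms by (intro power_mono) auto
  then have 1: "h1 D H b x \<le> h1 D H b (D/2)" unfolding h_eq using assms
    by (intro divide_left_mono) (auto intro!: mult_pos_pos add_nonneg_pos)
  have 2: "h2 D H b x \<le> h2 D H b (D/2)" unfolding h_eq using assms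
    by (intro divide_left_mono) (auto intro!: mult_pos_pos add_nonneg_pos)
  show ?thesis using 1 2 by simp
qed


lemma feas_G:
  assumes "P3_feasible D H b P a1 a2 r r1 r2 x p1 p2" "H > 0" "b > 0" "a1 + a2 = 1"
  shows "GG D H b P a1 a2 x p1 p2 r"
proof -
  have hp: "h1 D H b x > 0" "h2 D H b x > 0" using h_pos assms by auto
  from assms(1) have f: "r1 \<ge> a1 * r" "r2 \<ge> a2 * r" "p1 + p2 \<le> P" "p1 \<ge> 0" "p2 \<ge> 0"
    and c: "r1 \<le> log 2 (1 + p1 * h1 D H b x)" "r2 \<le> log 2 (1 + p2 * h2 D H b x)"
      "r1 + r2 \<le> log 2 (1 + p1 * h1 D H b x + p2 * h2 D H b x)"
    unfolding P3_feasible_def C_MAC_def by auto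
  have q: "p1 * h1 D H b x \<ge> 0" "p2 * h2 D H b x \<ge> 0" using f hp by auto
  have "a1 * r \<le> log 2 (1 + p1 * h1 D H b x)" using f c by linarith
  then have 1: "2 powr (a1 * r) \<le> 1 + p1 * h1 D H b x" using q by (subst (asm) le_log_iff) auto
  have "a2 * r \<le> log 2 (1 + p2 * h2 D H b x)" using f c by linarith
  then have 2: "2 powr (a2 * r) \<le> 1 + p2 * h2 D H b x" using q by (subst (asm) le_log_iff) auto
  have "r = a1 * r + a2 * r" using assms(4) by (metis distrib_right mult_1)
  then have "r \<le> log 2 (1 + p1 * h1 D H b x + p2 * h2 D H b x)" using f c by linarith
  then have 3: "2 powr r \<le> 1 + p1 * h1 D H b x + p2 * h2 D H b x" using q by (subst (asm) le_log_iff) auto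
  show ?thesis unfolding GG_def using f 1 2 3 by auto
qed

lemma G_feas:
  assumes "GG D H b P a1 a2 x p1 p2 r" "H > 0" "b > 0" "a1 + a2 = 1" "a1 \<ge> 0" "a2 \<ge> 0" "r \<ge> 0"
  shows "P3_feasible D H b P a1 a2 r (a1 * r) (a2 * r) x p1 p2"
proof -
  have hp: "h1 D H b x > 0" "h2 D H b x > 0" using h_pos assms by auto
  from assms(1) have f: "p1 + p2 \<le> P" "p1 \<ge> 0" "p2 \<ge> 0"
    and g: "2 powr (a1 * r) \<le> 1 + p1 * h1 D H b x" "2 powr (a2 * r) \<le> 1 + p2 * h2 D H b x"
      "2 powr r \<le> 1 + p1 * h1 D H b x + p2 * h2 D H b x"
    unfolding GG_def by auto
  have q: "p1 * h1 D H b x \<ge> 0" "p2 * h2 D H b x \<ge> 0" using f hp by auto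
  have 1: "a1 * r \<le> log 2 (1 + p1 * h1 D H b x)" using q g by (subst le_log_iff) auto
  have 2: "a2 * r \<le> log 2 (1 + p2 * h2 D H b x)" using q g by (subst le_log_iff) auto
  have 3: "r \<le> log 2 (1 + p1 * h1 D H b x + p2 * h2 D H b x)" using q g by (subst le_log_iff) auto
  have "a1 * r + a2 * r = r" using assms(4) by (metis distrib_right mult_1)
  then show ?thesis unfolding P3_feasible_def C_MAC_def using f 1 2 3 assms by auto
qed

lemma G_bound:
  assumes "GG D H b P a1 a2 x p1 p2 r" "H > 0" "b > 0"
  shows "r \<le> log 2 (1 + P * (b / H^2))"
proof -
  from assms(1) have f: "p1 + p2 \<le> P" "p1 \<ge> 0" "p2 \<ge> 0"
    and g: "2 powr r \<le> 1 + p1 * h1 D H b x + p2 * h2 D H b x"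
    unfolding GG_def by auto
  have hb: "h1 D H b x \<le> b / H^2" "h2 D H b x \<le> b / H^2" using h_bound assms by auto
  have "p1 * h1 D H b x \<le> p1 * (b / H^2)" using hb(1) f(2) by (rule mult_left_mono)
  moreover have "p2 * h2 D H b x \<le> p2 * (b / H^2)" using hb(2) f(3) by (rule mult_left_mono)
  moreover have "(p1 + p2) * (b / H^2) \<le> P * (b / H^2)" using f assms by (intro mult_right_mono) auto
  moreover have "(p1 + p2) * (b / H^2) = p1 * (b / H^2) + p2 * (b / H^2)" by (rule distrib_right)
  ultimately have "2 powr r \<le> 1 + P * (b / H^2)" using g by linarith
  moreover have "0 \<le> P * (b / H^2)" using f assms by simp
  ultimately show ?thesis by (subst le_log_iff) auto
qed

lemma G_right:
  assumes "GG D H b P a1 a2 x p1 p2 r" "x \<ge> D/2" "D > 0" "H > 0" "b > 0"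
  shows "GG D H b P a1 a2 (D/2) p1 p2 r"
proof -
  have hb: "h1 D H b x \<le> h1 D H b (D/2)" "h2 D H b x \<le> h2 D H b (D/2)" using h_right assms by auto
  from assms(1) have f: "p1 + p2 \<le> P" "p1 \<ge> 0" "p2 \<ge> 0" unfolding GG_def by auto
  have "p1 * h1 D H b x \<le> p1 * h1 D H b (D/2)" "p2 * h2 D H b x \<le> p2 * h2 D H b (D/2)"
    using hb f by (auto intro: mult_left_mono)
  then show ?thesis using assms(1) unfolding GG_def by auto
qed

lemma G_sym:
  assumes "GG D H b P a1 a2 x p1 p2 r" "x \<le> 0" "D > 0" "H > 0" "b > 0" "r \<ge> 0"
    "a1 \<ge> 0" "a1 \<le> a2" "a1 + a2 = 1"
  shows "\<exists>p1' p2'. GG D H b P a1 a2 (-x) p1' p2' r"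
proof -
  define u where "u = h1 D H b x"
  define v where "v = h2 D H b x"
  have uv: "u > 0" "v > 0" "v \<le> u" using h_pos h_order assms unfolding u_def v_def by auto
  from assms(1) have f: "p1 + p2 \<le> P" "p1 \<ge> 0" "p2 \<ge> 0"
    and g: "2 powr (a1 * r) \<le> 1 + p1 * u" "2 powr (a2 * r) \<le> 1 + p2 * v"
      "2 powr r \<le> 1 + p1 * u + p2 * v"
    unfolding GG_def u_def v_def by auto
  define s1 where "s1 = 2 powr (a1 * r) - 1"
  define s2 where "s2 = 2 powr (a2 * r) - 1"
  define q1 where "q1 = p1 * u"
  define q2 where "q2 = p2 * v"
  have "0 \<le> a1 * r" using assms by simp
  then have "2 powr 0 \<le> 2 powr (a1 * r)" by (subst powr_le_cancel_iff) auto
  then have s1: "s1 \<ge> 0" by (simp add: s1_def)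
  have s12: "s1 \<le> s2" using assms by (simp add: s1_def s2_def mult_right_mono)
  have s2: "s2 \<ge> 0" using s1 s12 by simp
  have ra: "r = a1 * r + a2 * r" using assms(9) by (metis distrib_right mult_1)
  have "2 powr (a1 * r + a2 * r) = 2 powr (a1 * r) * 2 powr (a2 * r)" by (rule powr_add)
  then have "2 powr r = 2 powr (a1 * r) * 2 powr (a2 * r)" by (simp only: ra[symmetric])
  then have "2 powr r - 1 - s1 - s2 = s1 * s2" by (simp add: s1_def s2_def algebra_simps)
  moreover have "s1 * s2 \<ge> 0" using s1 s2 by simp
  ultimately have ss: "s1 + s2 \<le> 2 powr r - 1" by linarith
  have q: "q1 \<ge> s1" "q2 \<ge> s2" "q1 + q2 \<ge> 2 powr r - 1"
    using g by (auto simp: s1_def s2_def q1_def q2_def)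
  define t where "t = min q2 (q1 + q2 - s2)"
  have t: "s1 \<le> t" "t \<le> q2" "s2 \<le> q1 + q2 - t" using q ss s12 by (auto simp: t_def)
  define p1' where "p1' = t / v"
  define p2' where "p2' = (q1 + q2 - t) / u"
  have pp: "p1' \<ge> 0" "p2' \<ge> 0" using t s1 s2 uv by (auto simp: p1'_def p2'_def)
  have e1: "p1' * v = t" "p2' * u = q1 + q2 - t" using uv by (auto simp: p1'_def p2'_def)
  have "p1' + p2' \<le> p1 + p2"
  proof -
    have a: "(q2 - t) / u \<le> (q2 - t) / v" using t uv by (intro divide_left_mono) auto
    have b: "(q1 + q2 - t) / u = q1 / u + (q2 - t) / u" using uv by (simp add: field_simps)
    have c: "q2 / v = t / v + (q2 - t) / v" using uv by (simp add: field_simps)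
    have "p1' + p2' = t / v + (q1 + q2 - t) / u" by (simp add: p1'_def p2'_def)
    moreover have "p1 + p2 = q1 / u + q2 / v" using uv by (simp add: q1_def q2_def)
    ultimately show ?thesis using a b c by linarith
  qed
  moreover have "2 powr (a1 * r) \<le> 1 + p1' * v" using e1 t by (simp add: s1_def)
  moreover have "2 powr (a2 * r) \<le> 1 + p2' * u" using e1 t by (simp add: s2_def)
  moreover have "2 powr r \<le> 1 + p1' * v + p2' * u" using e1 q by simp
  ultimately have "GG D H b P a1 a2 (-x) p1' p2' r"
    unfolding GG_def h_sym u_def[symmetric] v_def[symmetric] using pp f by simp
  then show ?thesis by blast
qed

lemma G_reduce:
  assumes "GG D H b P a1 a2 x p1 p2 r" "D > 0" "H > 0" "b > 0" "r \<ge> 0"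
    "a1 \<ge> 0" "a1 \<le> a2" "a1 + a2 = 1"
  shows "\<exists>x' p1' p2'. 0 \<le> x' \<and> x' \<le> D/2 \<and> GG D H b P a1 a2 x' p1' p2' r"
proof -
  obtain y q1 q2 where y: "y \<ge> 0" "GG D H b P a1 a2 y q1 q2 r"
  proof (cases "x \<le> 0")
    case True
    then obtain p1' p2' where "GG D H b P a1 a2 (-x) p1' p2' r" using G_sym assms by blast
    then show ?thesis using that[of "-x" p1' p2'] True by auto
  next
    case False
    then show ?thesis using that[of x p1 p2] assms(1) by auto
  qed
  show ?thesis
  proof (cases "y \<le> D/2")
    case True
    then show ?thesis using y by blast
  next
    case False
    then have "GG D H b P a1 a2 (D/2) q1 q2 r" using G_right y assms by auto
    moreover have "0 \<le> D/2" using assms by simp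
    ultimately show ?thesis by blast
  qed
qed


lemma cont_h:
  assumes "(H::real) > 0"
  shows "continuous_on UNIV (\<lambda>z::real\<times>real\<times>real\<times>real. 1 + fst (snd z) * h1 D H b (fst z))"
    "continuous_on UNIV (\<lambda>z::real\<times>real\<times>real\<times>real. 1 + fst (snd (snd z)) * h2 D H b (fst z))"
    "continuous_on UNIV (\<lambda>z::real\<times>real\<times>real\<times>real. 1 + fst (snd z) * h1 D H b (fst z) + fst (snd (snd z)) * h2 D H b (fst z))"
    "continuous_on UNIV (\<lambda>z::real\<times>real\<times>real\<times>real. 2 powr (a * snd (snd (snd z))))"
    "continuous_on UNIV (\<lambda>z::real\<times>real\<times>real\<times>real. 2 powr (snd (snd (snd z))))"
    "continuous_on UNIV (\<lambda>z::real\<times>real\<times>real\<times>real. fst (snd z) + fst (snd (snd z)))"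
    "continuous_on UNIV (\<lambda>z::real\<times>real\<times>real\<times>real. P)"
  unfolding h_eq using assms
  by (intro continuous_intros; auto intro!: add_nonneg_pos[THEN less_imp_neq, symmetric])+

theorem proposition2:
  fixes D H beta0 Pbar a1 a2 :: real
  assumes "D > 0" "H > 0" "beta0 > 0" "Pbar > 0"
    and "a1 \<ge> 0" "a2 \<ge> 0" "a1 + a2 = 1" "a2 \<ge> a1"
  shows "\<exists>r r1 r2 x p1 p2.
           P3_feasible D H beta0 Pbar a1 a2 r r1 r2 x p1 p2 \<and>
           (\<forall>r' r1' r2' x' p1' p2'. P3_feasible D H beta0 Pbar a1 a2 r' r1' r2' x' p1' p2' \<longrightarrow> r' \<le> r) \<and>
           0 \<le> x \<and> x \<le> D / 2"
proof -
  define Rm where "Rm = log 2 (1 + Pbar * (beta0 / H^2))"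
  define B :: "(real \<times> real \<times> real \<times> real) set" where
    "B = {0..D/2} \<times> {0..Pbar} \<times> {0..Pbar} \<times> {0..Rm}"
  define S :: "(real \<times> real \<times> real \<times> real) set" where
    "S = {z. fst (snd z) + fst (snd (snd z)) \<le> Pbar} \<inter>
         {z. 2 powr (a1 * snd (snd (snd z))) \<le> 1 + fst (snd z) * h1 D H beta0 (fst z)} \<inter>
         {z. 2 powr (a2 * snd (snd (snd z))) \<le> 1 + fst (snd (snd z)) * h2 D H beta0 (fst z)} \<inter>
         {z. 2 powr (snd (snd (snd z))) \<le> 1 + fst (snd z) * h1 D H beta0 (fst z)
               + fst (snd (snd z)) * h2 D H beta0 (fst z)}"
  define K where "K = S \<inter> B"
  note ch = cont_h[OF assms(2)]
  have "closed S" unfolding S_def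
    by (intro closed_Int closed_Collect_le ch)
  moreover have "compact B" unfolding B_def by (intro compact_Times compact_Icc)
  ultimately have cK: "compact K" unfolding K_def by (rule closed_Int_compact)
  have memK: "(x, p1, p2, r) \<in> K \<longleftrightarrow> 0 \<le> x \<and> x \<le> D/2 \<and> p1 \<le> Pbar \<and> p2 \<le> Pbar \<and>
      0 \<le> r \<and> r \<le> Rm \<and> GG D H beta0 Pbar a1 a2 x p1 p2 r" for x p1 p2 r
    unfolding K_def S_def B_def GG_def by auto
  have g0: "GG D H beta0 Pbar a1 a2 0 0 0 0" unfolding GG_def using assms by simp
  moreover have "0 \<le> Rm" using G_bound[OF g0] assms by (simp add: Rm_def)
  ultimately have "(0, 0, 0, 0) \<in> K" using memK assms by auto
  then have ne: "(\<lambda>z. snd (snd (snd z))) ` K \<noteq> {}" by blast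
  have "compact ((\<lambda>z. snd (snd (snd z))) ` K)"
    by (intro compact_continuous_image cK continuous_intros)
  from compact_attains_sup[OF this ne] obtain y where
    y1: "y \<in> (\<lambda>z. snd (snd (snd z))) ` K" and y2: "\<forall>t\<in>(\<lambda>z. snd (snd (snd z))) ` K. t \<le> y"
    by blast
  from y1 obtain z where zK: "z \<in> K" and yz: "y = snd (snd (snd z))" by blast
  have zmax: "\<And>w. w \<in> K \<Longrightarrow> snd (snd (snd w)) \<le> snd (snd (snd z))" using y2 yz by blast
  obtain x0 p10 p20 r0 where zz: "z = (x0, p10, p20, r0)" by (cases z) auto
  have z0: "0 \<le> x0" "x0 \<le> D/2" "0 \<le> r0" "GG D H beta0 Pbar a1 a2 x0 p10 p20 r0"
    using zK memK zz by auto
  have max: "r' \<le> r0" if f: "P3_feasible D H beta0 Pbar a1 a2 r' r1' r2' x' p1' p2'"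
    for r' r1' r2' x' p1' p2'
  proof (cases "r' \<le> 0")
    case True then show ?thesis using z0 by linarith
  next
    case False
    have g: "GG D H beta0 Pbar a1 a2 x' p1' p2' r'" using feas_G[OF f] assms by auto
    then obtain x'' q1 q2 where x'': "0 \<le> x''" "x'' \<le> D/2" "GG D H beta0 Pbar a1 a2 x'' q1 q2 r'"
      using G_reduce[OF g] assms False by force
    have "r' \<le> Rm" using G_bound[OF x''(3)] assms by (simp add: Rm_def)
    moreover have "q1 \<le> Pbar" "q2 \<le> Pbar" using x''(3) unfolding GG_def by auto
    ultimately have "(x'', q1, q2, r') \<in> K" using memK x'' False by auto
    from zmax[OF this] show ?thesis using zz by simp
  qed
  have "P3_feasible D H beta0 Pbar a1 a2 r0 (a1 * r0) (a2 * r0) x0 p10 p20"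
    using G_feas[OF z0(4)] assms z0 by auto
  then show ?thesis using max z0 by blast
qed

end
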